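(* Let $l\ge 1$ be an integer and let $A$ be the Hankel operator on $L^2(\mathbb{R}_+)$, $(Af)(x)=\int_0^\infty a(x+y)f(y)\,dy$, with kernel $$a(x)=e^{-x/2}L^{1}_{l-1}(x),\qquad x>0 .$$ Then $A$ has rank $l$. Its non-zero eigenvalues are $\lambda_n=(-1)^{n-l}$, $n=1,\dots,l$, and the eigenfunction corresponding to $\lambda_n$ is $$\psi_n(x)=e^{-x/2}x^{p-1/2}L^{2p}_{n-1}(x),\qquad p=l+\tfrac12-n .$$
   Context: $\mathbb{R}_+=(0,\infty)$. $L^{\alpha}_m$ denotes the generalized Laguerre polynomial of degree $m$ and parameter $\alpha$ (with leading coefficient $(-1)^m/m!$). *)

theory Defs
  imports "HOL-Analysis.Analysis"
begin

definition laguerre :: "real \<Rightarrow> nat \<Rightarrow> real \<Rightarrow> real" where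
  "laguerre \<alpha> m x = (\<Sum>k\<le>m. (-1)^k * ((of_nat m + \<alpha>) gchoose (m - k)) * x^k / fact k)"

text \<open>Membership in L^2(R_+): a Borel measurable real function whose square is
  Lebesgue integrable on (0,infinity). Only values on (0,infinity) matter.\<close>
definition L2pos :: "(real \<Rightarrow> real) \<Rightarrow> bool" where
  "L2pos f \<longleftrightarrow> f \<in> borel_measurable lborel \<and> set_integrable lborel {0<..} (\<lambda>x. (f x)^2)"

text \<open>Equality almost everywhere on R_+ (equality as elements of L^2(R_+)).\<close>
definition ae_eq_pos :: "(real \<Rightarrow> real) \<Rightarrow> (real \<Rightarrow> real) \<Rightarrow> bool" where
  "ae_eq_pos f g \<longleftrightarrow> (AE x in lborel. x > 0 \<longrightarrow> f x = g x)"

definition hankel_op :: "(real \<Rightarrow> real) \<Rightarrow> (real \<Rightarrow> real) \<Rightarrow> real \<Rightarrow> real" where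
  "hankel_op a f x = (LINT y:{0<..}|lborel. a (x + y) * f y)"

definition hankel_eigenvalue :: "(real \<Rightarrow> real) \<Rightarrow> real \<Rightarrow> bool" where
  "hankel_eigenvalue a \<mu> \<longleftrightarrow>
     (\<exists>f. L2pos f \<and> \<not> ae_eq_pos f (\<lambda>_. 0) \<and> ae_eq_pos (hankel_op a f) (\<lambda>x. \<mu> * f x))"

definition hankel_eigenfunction :: "(real \<Rightarrow> real) \<Rightarrow> real \<Rightarrow> (real \<Rightarrow> real) \<Rightarrow> bool" where
  "hankel_eigenfunction a \<mu> f \<longleftrightarrow>
     L2pos f \<and> \<not> ae_eq_pos f (\<lambda>_. 0) \<and> ae_eq_pos (hankel_op a f) (\<lambda>x. \<mu> * f x)"

definition ae_lin_indep :: "nat \<Rightarrow> (nat \<Rightarrow> real \<Rightarrow> real) \<Rightarrow> bool" where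
  "ae_lin_indep l g \<longleftrightarrow>
     (\<forall>c. ae_eq_pos (\<lambda>x. \<Sum>i<l. c i * g i x) (\<lambda>_. 0) \<longrightarrow> (\<forall>i<l. c i = 0))"

definition hankel_rank :: "(real \<Rightarrow> real) \<Rightarrow> nat \<Rightarrow> bool" where
  "hankel_rank a l \<longleftrightarrow>
     (\<exists>g. (\<forall>i<l. \<exists>f. L2pos f \<and> ae_eq_pos (g i) (hankel_op a f)) \<and> ae_lin_indep l g \<and>
          (\<forall>f. L2pos f \<longrightarrow> (\<exists>c. ae_eq_pos (hankel_op a f) (\<lambda>x. \<Sum>i<l. c i * g i x))))"

end

theory Submission
  imports Defs "HOL-Probability.Distributions" "HOL-Computational_Algebra.Formal_Power_Series"
begin


lemma negbin: "(-1::real)^t * of_nat ((t+q) choose t) = ((- real q - 1) gchoose t)"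
proof -
  have "((- real q - 1) gchoose t) = (-1)^t * ((of_nat t - (- real q - 1) - 1) gchoose t)"
    by (rule gbinomial_negated_upper)
  also have "of_nat t - (- real q - 1) - 1 = real (t+q)" by simp
  finally show ?thesis by (simp add: binomial_gbinomial)
qed

lemma vand: "(\<Sum>t\<le>n. (-1::real)^t * of_nat (B choose (n-t)) * of_nat ((t+q) choose t))
   = (real B - real q - 1) gchoose n"
proof -
  have "(\<Sum>t\<le>n. (-1::real)^t * of_nat (B choose (n-t)) * of_nat ((t+q) choose t))
     = (\<Sum>t=0..n. ((- real q - 1) gchoose t) * (real B gchoose (n - t)))"
    by (intro sum.cong) (auto simp: negbin[symmetric] binomial_gbinomial[symmetric] atLeast0AtMost)
  also have "\<dots> = ((- real q - 1) + real B) gchoose n" by (rule gbinomial_Vandermonde)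
  finally show ?thesis by (simp add: algebra_simps)
qed


definition alpha :: "nat \<Rightarrow> nat \<Rightarrow> real" where
  "alpha N r = (-1)^r * of_nat ((N+1) choose (N-r)) / fact r"
definition beta :: "nat \<Rightarrow> nat \<Rightarrow> nat \<Rightarrow> real" where
  "beta K k i = (-1)^i * of_nat (K choose (k-i)) / fact i"

lemma fact_ratio: "fact (t+q) / fact t = (fact q :: real) * of_nat ((t+q) choose t)"
  by (simp add: binomial_fact field_simps)

lemma inner_t:
  assumes "i \<le> k" "j \<le> m + k"
  shows "(\<Sum>t\<le>m+k-j. (-1::real)^t * of_nat ((m+k+1) choose ((m+k-j)-t)) * fact (t+(m+i)) / fact t)
     = fact (m+i) * of_nat ((k-i) choose (m+k-j))"
proof -
  have "(\<Sum>t\<le>m+k-j. (-1::real)^t * of_nat ((m+k+1) choose ((m+k-j)-t)) * fact (t+(m+i)) / fact t)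
     = fact (m+i) * (\<Sum>t\<le>m+k-j. (-1::real)^t * of_nat ((m+k+1) choose ((m+k-j)-t)) * of_nat ((t+(m+i)) choose t))"
    unfolding sum_distrib_left
  proof (intro sum.cong refl)
    fix t
    show "(-1::real)^t * of_nat ((m+k+1) choose ((m+k-j)-t)) * fact (t+(m+i)) / fact t
      = fact (m+i) * ((-1::real)^t * of_nat ((m+k+1) choose ((m+k-j)-t)) * of_nat ((t+(m+i)) choose t))"
    proof -
      have "(-1::real)^t * of_nat ((m+k+1) choose ((m+k-j)-t)) * fact (t+(m+i)) / fact t
        = (-1::real)^t * of_nat ((m+k+1) choose ((m+k-j)-t)) * (fact (t+(m+i)) / fact t)" by simp
      also have "\<dots> = (-1::real)^t * of_nat ((m+k+1) choose ((m+k-j)-t)) * (fact (m+i) * of_nat ((t+(m+i)) choose t))"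
        by (simp only: fact_ratio)
      finally show ?thesis by (simp only: ac_simps)
    qed
  qed
  also have "\<dots> = fact (m+i) * ((real (m+k+1) - real (m+i) - 1) gchoose (m+k-j))"
    by (subst vand) simp
  also have "real (m+k+1) - real (m+i) - 1 = real (k - i)" using assms by simp
  finally show ?thesis by (simp add: binomial_gbinomial)
qed

lemma inner_i:
  assumes "j \<le> m + k" "m \<le> j"
  shows "(\<Sum>i\<le>k. (-1::real)^i * of_nat ((2*m+k+1) choose (k-i)) * of_nat ((i+m) choose i) * of_nat ((k-i) choose (m+k-j)))
     = of_nat ((2*m+k+1) choose (m+k-j)) * of_nat (j choose (j-m))"
proof -
  define s where "s = m+k-j"
  define K where "K = 2*m+k+1"
  have sk: "s \<le> k" using assms by (simp add: s_def)
  have "(\<Sum>i\<le>k. (-1::real)^i * of_nat (K choose (k-i)) * of_nat ((i+m) choose i) * of_nat ((k-i) choose s))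
      = (\<Sum>i\<le>k-s. (-1::real)^i * of_nat (K choose (k-i)) * of_nat ((i+m) choose i) * of_nat ((k-i) choose s))"
    by (rule sum.mono_neutral_right) auto
  also have "\<dots> = (\<Sum>i\<le>k-s. of_nat (K choose s) * ((-1::real)^i * of_nat ((K-s) choose ((k-s)-i)) * of_nat ((i+m) choose i)))"
  proof (intro sum.cong refl)
    fix i assume "i \<in> {..k-s}"
    hence "s \<le> k - i" "k - i \<le> K" using sk by (simp_all add: K_def)
    hence "(K choose (k-i)) * ((k-i) choose s) = (K choose s) * ((K - s) choose (k - i - s))"
      by (rule choose_mult)
    hence "real (K choose (k-i)) * real ((k-i) choose s) = real (K choose s) * real ((K - s) choose (k - i - s))"
      by (metis of_nat_mult)
    moreover have "k - i - s = (k - s) - i" by simp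
    ultimately have "real (K choose (k-i)) * real ((k-i) choose s) = real (K choose s) * real ((K - s) choose ((k - s) - i))"
      by simp
    thus "(-1::real)^i * of_nat (K choose (k-i)) * of_nat ((i+m) choose i) * of_nat ((k-i) choose s)
       = of_nat (K choose s) * ((-1::real)^i * of_nat ((K-s) choose ((k-s)-i)) * of_nat ((i+m) choose i))"
      by (simp add: algebra_simps)
  qed
  also have "\<dots> = of_nat (K choose s) * ((real (K-s) - real m - 1) gchoose (k-s))"
    by (simp only: sum_distrib_left[symmetric] vand)
  also have "real (K-s) - real m - 1 = real j" using assms by (simp add: K_def s_def)
  also have "k - s = j - m" using assms by (simp add: s_def)
  finally show ?thesis by (simp add: K_def s_def binomial_gbinomial)
qed


lemma alpha_binom:
  assumes "j + t \<le> m + k"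
  shows "alpha (m+k) (j+t) * of_nat ((j+t) choose j)
     = (-1)^j / fact j * ((-1::real)^t * of_nat ((m+k+1) choose ((m+k-j)-t)) / fact t)"
proof -
  have b: "real ((j+t) choose j) = fact (j+t) / (fact j * fact t)"
    by (simp add: binomial_fact)
  have e: "m+k-(j+t) = (m+k-j)-t" by simp
  show ?thesis unfolding alpha_def b e by (simp add: power_add field_simps)
qed

lemma core:
  assumes "j \<le> m + k"
  shows "(\<Sum>t\<le>m+k-j. alpha (m+k) (j+t) * of_nat ((j+t) choose j) *
            (\<Sum>i\<le>k. beta (2*m+k+1) k i * fact (t+(m+i))))
       = (if m \<le> j then (-1)^m * beta (2*m+k+1) k (j-m) else 0)"
proof -
  define K where "K = 2*m+k+1"
  have "(\<Sum>t\<le>m+k-j. alpha (m+k) (j+t) * of_nat ((j+t) choose j) *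
            (\<Sum>i\<le>k. beta K k i * fact (t+(m+i))))
     = (\<Sum>t\<le>m+k-j. \<Sum>i\<le>k. (-1)^j / fact j * (beta K k i *
           ((-1::real)^t * of_nat ((m+k+1) choose ((m+k-j)-t)) * fact (t+(m+i)) / fact t)))"
    by (intro sum.cong refl, subst alpha_binom) (use assms in \<open>auto simp: sum_distrib_left field_simps\<close>)
  also have "\<dots> = (-1)^j / fact j * (\<Sum>i\<le>k. beta K k i *
         (\<Sum>t\<le>m+k-j. (-1::real)^t * of_nat ((m+k+1) choose ((m+k-j)-t)) * fact (t+(m+i)) / fact t))"
    by (subst sum.swap) (simp add: sum_distrib_left)
  also have "\<dots> = (-1)^j / fact j * (\<Sum>i\<le>k. beta K k i * (fact (m+i) * of_nat ((k-i) choose (m+k-j))))"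
  proof -
    have "\<And>i. i \<in> {..k} \<Longrightarrow> (\<Sum>t\<le>m+k-j. (-1::real)^t * of_nat ((m+k+1) choose ((m+k-j)-t)) * fact (t+(m+i)) / fact t)
     = fact (m+i) * of_nat ((k-i) choose (m+k-j))" by (rule inner_t) (use assms in auto)
    thus ?thesis by (metis (no_types, lifting) sum.cong)
  qed
  also have "\<dots> = (-1)^j * fact m / fact j * (\<Sum>i\<le>k. (-1::real)^i * of_nat (K choose (k-i)) * of_nat ((i+m) choose i) * of_nat ((k-i) choose (m+k-j)))"
  proof -
    have "beta K k i * (fact (m+i) * of_nat ((k-i) choose (m+k-j)))
        = fact m * ((-1::real)^i * of_nat (K choose (k-i)) * of_nat ((i+m) choose i) * of_nat ((k-i) choose (m+k-j)))" for i
    proof -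
      have "fact (i+m) / fact i = (fact m :: real) * of_nat ((i+m) choose i)" by (rule fact_ratio)
      hence "(fact (m+i) :: real) = fact m * of_nat ((i+m) choose i) * fact i" by (simp add: field_simps add.commute)
      thus ?thesis unfolding beta_def by (simp add: field_simps)
    qed
    hence "(\<Sum>i\<le>k. beta K k i * (fact (m+i) * of_nat ((k-i) choose (m+k-j))))
       = fact m * (\<Sum>i\<le>k. (-1::real)^i * of_nat (K choose (k-i)) * of_nat ((i+m) choose i) * of_nat ((k-i) choose (m+k-j)))"
      by (simp only: sum_distrib_left)
    thus ?thesis by simp
  qed
  also have "\<dots> = (if m \<le> j then (-1)^m * beta K k (j-m) else 0)"
  proof (cases "m \<le> j")
    case True
    have "(-1)^j * fact m / fact j * (\<Sum>i\<le>k. (-1::real)^i * of_nat (K choose (k-i)) * of_nat ((i+m) choose i) * of_nat ((k-i) choose (m+k-j)))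
       = (-1)^j * fact m / fact j * (of_nat (K choose (m+k-j)) * of_nat (j choose (j-m)))"
      using inner_i[OF assms True] by (simp add: K_def)
    also have "real (j choose (j-m)) = fact j / (fact (j-m) * fact m)"
      using True by (simp add: binomial_fact)
    also have "(-1)^j * fact m / fact j * (of_nat (K choose (m+k-j)) * (fact j / (fact (j-m) * fact m)))
       = (-1::real)^j * of_nat (K choose (m+k-j)) / fact (j-m)" by (simp add: field_simps)
    also have "\<dots> = (-1)^m * beta K k (j-m)"
    proof -
      have "k - (j-m) = m+k-j" using True assms by simp
      moreover have "(-1::real)^j = (-1)^m * (-1)^(j-m)" using True by (simp add: power_add[symmetric])
      ultimately show ?thesis unfolding beta_def by simp
    qed
    finally show ?thesis using True by simp
  next
    case False
    hence "\<And>i. real ((k-i) choose (m+k-j)) = 0" by simp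
    thus ?thesis using False by (simp del: of_nat_eq_0_iff)
  qed
  finally show ?thesis by (simp add: K_def)
qed


lemma tri: "(\<Sum>r\<le>(n::nat). \<Sum>j\<le>r. g j (r-j)) = (\<Sum>j\<le>n. \<Sum>t\<le>n-j. (g j t :: real))"
proof -
  have "(\<Sum>r\<le>n. \<Sum>j\<le>r. g j (r-j)) = (\<Sum>(i,j)\<in>{(i,j). i+j \<le> n}. g i j)"
    by (rule sum.triangle_reindex_eq[symmetric])
  also have "{(i,j). i+j \<le> n} = Sigma {..n} (\<lambda>i. {..n-i})" by auto
  also have "(\<Sum>(i,j)\<in>Sigma {..n} (\<lambda>i. {..n-i}). g i j) = (\<Sum>j\<le>n. \<Sum>t\<le>n-j. g j t)"
    by (rule sum.Sigma[symmetric]) auto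
  finally show ?thesis .
qed

lemma poly_id:
  "(\<Sum>r\<le>m+k. alpha (m+k) r * (\<Sum>i\<le>k. beta (2*m+k+1) k i *
      (\<Sum>j\<le>r. of_nat (r choose j) * x^j * fact ((r-j)+(m+i)))))
   = (-1)^m * (\<Sum>i\<le>k. beta (2*m+k+1) k i * x^(m+i))"
proof -
  define K where "K = 2*m+k+1"
  define g where "g j t = alpha (m+k) (j+t) * of_nat ((j+t) choose j) * x^j *
            (\<Sum>i\<le>k. beta K k i * fact (t+(m+i)))" for j t
  have "(\<Sum>r\<le>m+k. alpha (m+k) r * (\<Sum>i\<le>k. beta K k i *
      (\<Sum>j\<le>r. of_nat (r choose j) * x^j * fact ((r-j)+(m+i)))))
     = (\<Sum>r\<le>m+k. \<Sum>j\<le>r. g j (r-j))"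
    unfolding g_def
    by (intro sum.cong refl) (simp add: sum_distrib_left sum_distrib_right sum.swap[of _ "{..k}"] algebra_simps)
  also have "\<dots> = (\<Sum>j\<le>m+k. \<Sum>t\<le>m+k-j. g j t)" by (rule tri)
  also have "\<dots> = (\<Sum>j\<le>m+k. x^j * (if m \<le> j then (-1)^m * beta K k (j-m) else 0))"
  proof (intro sum.cong refl)
    fix j assume "j \<in> {..m+k}"
    hence "j \<le> m+k" by simp
    have "(\<Sum>t\<le>m+k-j. g j t) = x^j * (\<Sum>t\<le>m+k-j. alpha (m+k) (j+t) * of_nat ((j+t) choose j) *
            (\<Sum>i\<le>k. beta K k i * fact (t+(m+i))))"
      unfolding g_def by (simp add: sum_distrib_left algebra_simps)
    also have "\<dots> = x^j * (if m \<le> j then (-1)^m * beta K k (j-m) else 0)"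
      using core[OF \<open>j \<le> m+k\<close>] by (simp add: K_def)
    finally show "(\<Sum>t\<le>m+k-j. g j t) = x^j * (if m \<le> j then (-1)^m * beta K k (j-m) else 0)" .
  qed
  also have "\<dots> = (\<Sum>j\<in>{m..m+k}. x^j * ((-1)^m * beta K k (j-m)))"
    by (rule sum.mono_neutral_cong_right) auto
  also have "\<dots> = (\<Sum>i\<le>k. x^(m+i) * ((-1)^m * beta K k i))"
    by (rule sum.reindex_bij_witness[of _ "\<lambda>i. i + m" "\<lambda>j. j - m"]) (auto simp: add.commute)
  also have "\<dots> = (-1)^m * (\<Sum>i\<le>k. beta K k i * x^(m+i))"
    by (simp add: sum_distrib_left algebra_simps)
  finally show ?thesis by (simp add: K_def)
qed


lemma gamma_nat:
  "has_bochner_integral lborel (\<lambda>y::real. indicator {0<..} y *\<^sub>R (exp (-y) * y^s)) (fact s)"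
proof (rule has_bochner_integral_nn_integral)
  show "(\<lambda>y::real. indicator {0<..} y *\<^sub>R (exp (-y) * y^s)) \<in> borel_measurable lborel" by (intro borel_measurable_scaleR borel_measurable_indicator) auto
  show "AE (x::real) in lborel. 0 \<le> indicator {0<..} x *\<^sub>R (exp (- x) * x ^ s)"
    by (auto simp: indicator_def)
  show "0 \<le> (fact s :: real)" by simp
  have "(\<integral>\<^sup>+(x::real). ennreal (indicator {0<..} x *\<^sub>R (exp (- x) * x ^ s)) \<partial>lborel)
     = (\<integral>\<^sup>+x. ennreal (x^s * exp (-x)) * indicator {0 ..} x \<partial>lborel)"
  proof (rule nn_integral_cong_AE)
    show "AE (x::real) in lborel. ennreal (indicator {0<..} x *\<^sub>R (exp (- x) * x ^ s)) = ennreal (x^s * exp (-x)) * indicator {0 ..} x"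
      using AE_lborel_singleton[of 0] by eventually_elim (auto simp: indicator_def mult.commute)
  qed
  also have "\<dots> = ennreal (fact s)" using nn_intergal_power_times_exp_Ici[of s] by simp
  finally show "(\<integral>\<^sup>+(x::real). ennreal (indicator {0<..} x *\<^sub>R (exp (- x) * x ^ s)) \<partial>lborel) = ennreal (fact s)" .
qed

lemma gamma_int: "set_integrable lborel {0<..} (\<lambda>y::real. exp (-y) * y^s)"
  using gamma_nat[of s] unfolding set_integrable_def by (auto simp: has_bochner_integral_iff)

lemma gamma_val: "(LINT y:{0<..}|lborel. exp (-y) * y^s) = (fact s :: real)"
  using gamma_nat[of s] unfolding set_lebesgue_integral_def by (auto simp: has_bochner_integral_iff)


lemma set_integrable_sum':
  fixes f :: "'i \<Rightarrow> 'a \<Rightarrow> real"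
  assumes "\<And>i. i \<in> I \<Longrightarrow> set_integrable M A (f i)"
  shows "set_integrable M A (\<lambda>x. \<Sum>i\<in>I. f i x)"
  using assms unfolding set_integrable_def by (simp add: sum_distrib_left)

lemma set_integral_sum':
  fixes f :: "'i \<Rightarrow> 'a \<Rightarrow> real"
  assumes "\<And>i. i \<in> I \<Longrightarrow> set_integrable M A (f i)"
  shows "(LINT x:A|M. (\<Sum>i\<in>I. f i x)) = (\<Sum>i\<in>I. LINT x:A|M. f i x)"
  using assms unfolding set_integrable_def set_lebesgue_integral_def
  by (simp add: sum_distrib_left integral_sum)

lemma set_integrable_congp:
  assumes "set_integrable lborel {0<..} f" "\<And>x::real. x > 0 \<Longrightarrow> f x = g x"
  shows "set_integrable lborel {0<..} g"
  using assms set_integrable_cong[of lborel lborel "{0<..}" "{0<..}" f g] by auto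

lemma set_integral_congp:
  assumes "\<And>x::real. x > 0 \<Longrightarrow> f x = g x"
  shows "(LINT x:{0<..}|lborel. f x) = (LINT x:{0<..}|lborel. g x)"
  by (rule set_lebesgue_integral_cong) (use assms in auto)

lemma gamma_int': "set_integrable lborel {0<..} (\<lambda>y::real. c * (exp (-y) * y^s))"
  using gamma_int by auto

lemma exp_half_sq: "exp (-(y::real)/2) * exp (-y/2) = exp (-y)"
  by (simp add: exp_add[symmetric])


locale hk =
  fixes l :: nat and a :: "real \<Rightarrow> real" and \<psi> :: "nat \<Rightarrow> real \<Rightarrow> real"
  assumes l1: "l \<ge> 1"
    and a_eq: "\<And>x. a x = exp (- x / 2) * laguerre 1 (l - 1) x"
    and psi_eq: "\<And>n x. \<psi> n x = (let p = real l + 1/2 - real n in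
            exp (- x / 2) * x powr (p - 1/2) * laguerre (2 * p) (n - 1) x)"
begin

abbreviation "N \<equiv> l - 1"
abbreviation "mm n \<equiv> l - n"
abbreviation "kk n \<equiv> n - 1"
abbreviation "KK n \<equiv> 2 * (l - n) + (n - 1) + 1"
definition bb :: "nat \<Rightarrow> nat \<Rightarrow> real" where "bb n i = beta (KK n) (kk n) i"

lemma a_expand: "a x = exp (-x/2) * (\<Sum>r\<le>N. alpha N r * x^r)"
proof -
  have "laguerre 1 N x = (\<Sum>r\<le>N. alpha N r * x^r)"
    unfolding laguerre_def alpha_def
  proof (intro sum.cong refl)
    fix r
    have "real N + 1 = real (N+1)" by simp
    hence "(real N + 1) gchoose (N - r) = real ((N+1) choose (N-r))"
      by (simp only: binomial_gbinomial)
    thus "(-1)^r * ((real N + 1) gchoose (N - r)) * x^r / fact r = (-1)^r * real ((N+1) choose (N-r)) / fact r * x^r"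
      by simp
  qed
  thus ?thesis using a_eq by simp
qed

lemma psi_expand:
  assumes "n \<in> {1..l}" "x > 0"
  shows "\<psi> n x = exp (-x/2) * (\<Sum>i\<le>kk n. bb n i * x^(mm n + i))"
proof -
  define p where "p = real l + 1/2 - real n"
  have p1: "p - 1/2 = real (mm n)" using assms by (simp add: p_def of_nat_diff)
  have p2: "real (kk n) + 2 * p = real (KK n)" using assms by (simp add: p_def of_nat_diff)
  have "\<psi> n x = exp (-x/2) * x powr (p - 1/2) * laguerre (2*p) (kk n) x"
    unfolding psi_eq p_def Let_def by simp
  also have "x powr (p - 1/2) = x^(mm n)" unfolding p1 using assms by (simp only: powr_realpow)
  also have "laguerre (2*p) (kk n) x = (\<Sum>i\<le>kk n. bb n i * x^i)"
    unfolding laguerre_def bb_def beta_def p2 by (intro sum.cong refl) (simp add: binomial_gbinomial)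
  finally show ?thesis by (simp add: sum_distrib_left power_add algebra_simps)
qed

lemma bb0: "n \<in> {1..l} \<Longrightarrow> bb n 0 \<noteq> 0"
  by (simp add: bb_def beta_def)

lemma a_shift:
  "a (x + y) = exp (-x/2) * exp (-y/2) *
     (\<Sum>r\<le>N. alpha N r * (\<Sum>j\<le>r. of_nat (r choose j) * x^j * y^(r-j)))"
proof -
  have "exp (-(x+y)/2) = exp (-x/2) * exp (-y/2)" by (simp add: exp_add[symmetric] field_simps)
  moreover have "(x+y)^r = (\<Sum>j\<le>r. of_nat (r choose j) * x^j * y^(r-j))" for r
    by (simp add: binomial_ring)
  ultimately show ?thesis by (simp add: a_expand)
qed

end


lemma abs_mult_le_sq: "\<bar>u * v\<bar> \<le> u^2 + (v::real)^2"
proof -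
  have "0 \<le> (\<bar>u\<bar> - \<bar>v\<bar>)^2" by simp
  hence "2 * (\<bar>u\<bar> * \<bar>v\<bar>) \<le> u^2 + v^2" by (simp add: power2_eq_square algebra_simps)
  moreover have "0 \<le> \<bar>u\<bar> * \<bar>v\<bar>" by simp
  ultimately show ?thesis unfolding abs_mult by linarith
qed

lemma Mint:
  assumes "L2pos f"
  shows "set_integrable lborel {0<..} (\<lambda>y. exp (-y/2) * y^t * f y)"
proof (rule set_integrable_bound)
  have fm[measurable]: "f \<in> borel_measurable lborel" using assms by (simp add: L2pos_def)
  have i2: "set_integrable lborel {0<..} (\<lambda>y. (f y)^2)" using assms by (simp add: L2pos_def)
  show "set_integrable lborel {0<..} (\<lambda>y. exp (-y) * y^(2*t) + (f y)^2)"
    using gamma_int i2 by (rule set_integral_add)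
  show "set_borel_measurable lborel {0<..} (\<lambda>y. exp (-y/2) * y^t * f y)"
  proof -
    have c0: "(\<lambda>y::real. exp (-y/2) * y^t) \<in> borel_measurable borel"
      by (intro borel_measurable_continuous_onI continuous_intros) auto
    hence c: "(\<lambda>y::real. exp (-y/2) * y^t) \<in> borel_measurable lborel" by simp
    show ?thesis unfolding set_borel_measurable_def
      by (intro borel_measurable_scaleR borel_measurable_indicator borel_measurable_times[OF c fm]) simp
  qed
  show "AE x in lborel. x \<in> {0<..} \<longrightarrow> norm (exp (-x/2) * x^t * f x) \<le> norm (exp (-x) * x^(2*t) + (f x)^2)"
  proof (intro AE_I2 impI)
    fix x :: real
    have "\<bar>(exp (-x/2) * x^t) * f x\<bar> \<le> (exp (-x/2) * x^t)^2 + (f x)^2" by (rule abs_mult_le_sq)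
    also have "(exp (-x/2) * x^t)^2 = exp (-x) * x^(2*t)"
    proof -
      have "(exp (-x/2) * x^t)^2 = (exp (-x/2) * exp (-x/2)) * (x^t)^2"
        by (simp only: power_mult_distrib power2_eq_square mult_ac)
      also have "exp (-x/2) * exp (-x/2) = exp (-x)" by (rule exp_half_sq)
      also have "(x^t)^2 = x^(2*t)" by (simp only: power_mult[symmetric] mult.commute)
      finally show ?thesis .
    qed
    finally have h: "\<bar>exp (-x/2) * x^t * f x\<bar> \<le> exp (-x) * x^(2*t) + (f x)^2" .
    have "0 \<le> x^(2*t)" unfolding power_mult by simp
    hence nn: "0 \<le> exp (-x) * x^(2*t) + (f x)^2" by simp
    show "norm (exp (-x/2) * x^t * f x) \<le> norm (exp (-x) * x^(2*t) + (f x)^2)"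
      unfolding real_norm_def abs_of_nonneg[OF nn] by (rule h)
  qed
qed

context hk begin

definition Mf :: "(real \<Rightarrow> real) \<Rightarrow> nat \<Rightarrow> real" where
  "Mf f t = (LINT y:{0<..}|lborel. exp (-y/2) * y^t * f y)"

lemma hankel_formula:
  assumes "\<And>t. set_integrable lborel {0<..} (\<lambda>y. exp (-y/2) * y^t * f y)"
  shows "set_integrable lborel {0<..} (\<lambda>y. a (x + y) * f y)"
    and "hankel_op a f x = exp (-x/2) * (\<Sum>r\<le>N. alpha N r * (\<Sum>j\<le>r. of_nat (r choose j) * x^j * Mf f (r-j)))"
proof -
  have eq: "a (x + y) * f y = (\<Sum>r\<le>N. \<Sum>j\<le>r. (exp (-x/2) * alpha N r * of_nat (r choose j) * x^j) * (exp (-y/2) * y^(r-j) * f y))" for y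
    unfolding a_shift sum_distrib_left sum_distrib_right by (intro sum.cong refl) (simp only: mult_ac)
  have int1: "set_integrable lborel {0<..} (\<lambda>y. (exp (-x/2) * alpha N r * of_nat (r choose j) * x^j) * (exp (-y/2) * y^(r-j) * f y))" for r j
    using assms by (intro set_integrable_mult_right) auto
  have int2: "set_integrable lborel {0<..} (\<lambda>y. \<Sum>j\<le>r. (exp (-x/2) * alpha N r * of_nat (r choose j) * x^j) * (exp (-y/2) * y^(r-j) * f y))" for r
    by (rule set_integrable_sum') (rule int1)
  show "set_integrable lborel {0<..} (\<lambda>y. a (x + y) * f y)"
    unfolding eq by (rule set_integrable_sum') (rule int2)
  have "hankel_op a f x = (LINT y:{0<..}|lborel. (\<Sum>r\<le>N. \<Sum>j\<le>r. (exp (-x/2) * alpha N r * of_nat (r choose j) * x^j) * (exp (-y/2) * y^(r-j) * f y)))"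
    unfolding hankel_op_def eq ..
  also have "\<dots> = (\<Sum>r\<le>N. \<Sum>j\<le>r. (exp (-x/2) * alpha N r * of_nat (r choose j) * x^j) * Mf f (r-j))"
    unfolding Mf_def
    by (subst set_integral_sum'[OF int2], intro sum.cong refl, subst set_integral_sum'[OF int1], simp)
  also have "\<dots> = exp (-x/2) * (\<Sum>r\<le>N. alpha N r * (\<Sum>j\<le>r. of_nat (r choose j) * x^j * Mf f (r-j)))"
    by (simp only: sum_distrib_left mult.assoc)
  finally show "hankel_op a f x = exp (-x/2) * (\<Sum>r\<le>N. alpha N r * (\<Sum>j\<le>r. of_nat (r choose j) * x^j * Mf f (r-j)))" .
qed

end


context hk begin

lemma psi_meas: "\<psi> n \<in> borel_measurable lborel"
proof -
  have "\<psi> n = (\<lambda>x. exp (- x / 2) * x powr (real l + 1/2 - real n - 1/2) *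
      (\<Sum>k\<le>n-1. (-1)^k * ((of_nat (n-1) + 2 * (real l + 1/2 - real n)) gchoose (n - 1 - k)) * x^k / fact k))"
    by (rule ext) (simp add: psi_eq laguerre_def Let_def)
  also have "\<dots> \<in> borel_measurable lborel" by measurable
  finally show ?thesis .
qed

lemma psi_sq:
  assumes "n \<in> {1..l}" "x > 0"
  shows "(\<psi> n x)^2 = (\<Sum>i\<le>kk n. \<Sum>i'\<le>kk n. (bb n i * bb n i') * (exp (-x) * x^(2 * mm n + i + i')))"
proof -
  have "(\<psi> n x)^2 = (exp (-x/2) * exp (-x/2)) * ((\<Sum>i\<le>kk n. bb n i * x^(mm n + i)) * (\<Sum>i'\<le>kk n. bb n i' * x^(mm n + i')))"
    unfolding psi_expand[OF assms] power2_eq_square by (simp only: mult_ac)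
  also have "\<dots> = (\<Sum>i\<le>kk n. \<Sum>i'\<le>kk n. (bb n i * bb n i') * (exp (-x) * x^(2 * mm n + i + i')))"
    apply (simp only: exp_half_sq)
    apply (simp only: sum_product)
    apply (simp only: sum_distrib_left)
    by (intro sum.cong refl) (simp add: power_add mult_2 mult_ac power_mult power2_eq_square)
  finally show ?thesis .
qed

lemma psi_L2: "n \<in> {1..l} \<Longrightarrow> L2pos (\<psi> n)"
  unfolding L2pos_def
proof (intro conjI psi_meas)
  assume n: "n \<in> {1..l}"
  have "set_integrable lborel {0<..} (\<lambda>x. \<Sum>i\<le>kk n. \<Sum>i'\<le>kk n. (bb n i * bb n i') * (exp (-x) * x^(2 * mm n + i + i')))"
    by (intro set_integrable_sum' gamma_int')
  thus "set_integrable lborel {0<..} (\<lambda>x. (\<psi> n x)^2)"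
    by (rule set_integrable_congp) (simp add: psi_sq[OF n])
qed

lemma psi_M:
  assumes "n \<in> {1..l}"
  shows "Mf (\<psi> n) t = (\<Sum>i\<le>kk n. bb n i * fact (t + (mm n + i)))"
proof -
  have "Mf (\<psi> n) t = (LINT y:{0<..}|lborel. (\<Sum>i\<le>kk n. bb n i * (exp (-y) * y^(t + (mm n + i)))))"
    unfolding Mf_def
  proof (rule set_integral_congp)
    fix y :: real assume "y > 0"
    show "exp (-y/2) * y^t * \<psi> n y = (\<Sum>i\<le>kk n. bb n i * (exp (-y) * y^(t + (mm n + i))))"
      unfolding psi_expand[OF assms \<open>y > 0\<close>] sum_distrib_left exp_half_sq[symmetric]
      by (intro sum.cong refl) (simp add: power_add mult_ac)
  qed
  also have "\<dots> = (\<Sum>i\<le>kk n. bb n i * fact (t + (mm n + i)))"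
    by (subst set_integral_sum') (auto intro: gamma_int' simp: gamma_val)
  finally show ?thesis .
qed

lemma psi_eigen:
  assumes n: "n \<in> {1..l}" and x: "x > 0"
  shows "hankel_op a (\<psi> n) x = (-1)^(mm n) * \<psi> n x"
proof -
  have N: "N = mm n + kk n" using n by auto
  have "hankel_op a (\<psi> n) x = exp (-x/2) * (\<Sum>r\<le>N. alpha N r * (\<Sum>j\<le>r. of_nat (r choose j) * x^j * Mf (\<psi> n) (r-j)))"
    by (rule hankel_formula(2)) (rule Mint[OF psi_L2[OF n]])
  also have "(\<Sum>r\<le>N. alpha N r * (\<Sum>j\<le>r. of_nat (r choose j) * x^j * Mf (\<psi> n) (r-j)))
     = (\<Sum>r\<le>mm n + kk n. alpha (mm n + kk n) r * (\<Sum>i\<le>kk n. beta (2*mm n+kk n+1) (kk n) i *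
      (\<Sum>j\<le>r. of_nat (r choose j) * x^j * fact ((r-j)+(mm n+i)))))"
    unfolding N psi_M[OF n] bb_def
    by (intro sum.cong refl) (simp add: sum_distrib_left mult_ac, rule sum.swap)
  also have "\<dots> = (-1)^(mm n) * (\<Sum>i\<le>kk n. beta (2*mm n+kk n+1) (kk n) i * x^(mm n+i))"
    by (rule poly_id)
  finally show ?thesis
    using psi_expand[OF n x] by (simp add: bb_def mult_ac)
qed

end


lemma ae_pos_infinite:
  assumes "AE x in lborel. (x::real) > 0 \<longrightarrow> P x"
  shows "infinite {x. P x}"
proof
  assume F: "finite {x. P x}"
  have "AE x in lborel. \<forall>z\<in>{x. P x}. x \<noteq> z"
    using F by (subst AE_finite_all) (auto intro: AE_lborel_singleton)
  with assms have "AE x in lborel. x \<notin> {0<..1::real}"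
    by eventually_elim auto
  moreover have "{x \<in> space lborel. \<not> x \<notin> {0<..1::real}} = {0<..1}" by auto
  ultimately have "emeasure lborel {0<..1::real} = 0"
    using AE_iff_measurable[of "{0<..1::real}" lborel "\<lambda>x. x \<notin> {0<..1::real}"] by auto
  thus False by simp
qed

context hk begin

definition spanpsi :: "(real \<Rightarrow> real) \<Rightarrow> bool" where
  "spanpsi h \<longleftrightarrow> (\<exists>d. \<forall>x>0. h x = (\<Sum>n\<in>{1..l}. d n * \<psi> n x))"

lemma span_psi: assumes "n \<in> {1..l}" shows "spanpsi (\<psi> n)"
  unfolding spanpsi_def
proof (rule exI[of _ "\<lambda>n'. if n' = n then 1 else 0"], intro allI impI)
  fix x :: real
  have "(\<Sum>n'\<in>{1..l}. (if n' = n then 1 else 0) * \<psi> n' x) = (\<Sum>n'\<in>{1..l}. if n' = n then \<psi> n x else 0)"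
    by (intro sum.cong) auto
  also have "\<dots> = \<psi> n x" using assms by (simp add: sum.delta)
  finally show "\<psi> n x = (\<Sum>n'\<in>{1..l}. (if n' = n then 1 else 0) * \<psi> n' x)" by simp
qed

lemma span_add: "spanpsi f \<Longrightarrow> spanpsi g \<Longrightarrow> spanpsi (\<lambda>x. f x + g x)"
  unfolding spanpsi_def
proof (elim exE)
  fix d e assume d: "\<forall>x>0. f x = (\<Sum>n\<in>{1..l}. d n * \<psi> n x)" and e: "\<forall>x>0. g x = (\<Sum>n\<in>{1..l}. e n * \<psi> n x)"
  show "\<exists>c. \<forall>x>0. f x + g x = (\<Sum>n\<in>{1..l}. c n * \<psi> n x)"
    by (rule exI[of _ "\<lambda>n. d n + e n"]) (simp add: d e distrib_right sum.distrib)
qed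

lemma span_scale: "spanpsi f \<Longrightarrow> spanpsi (\<lambda>x. c * f x)"
  unfolding spanpsi_def
proof (elim exE)
  fix d assume d: "\<forall>x>0. f x = (\<Sum>n\<in>{1..l}. d n * \<psi> n x)"
  show "\<exists>e. \<forall>x>0. c * f x = (\<Sum>n\<in>{1..l}. e n * \<psi> n x)"
    by (rule exI[of _ "\<lambda>n. c * d n"]) (simp add: d sum_distrib_left mult.assoc)
qed

lemma span_zero: "spanpsi (\<lambda>x. 0)"
  unfolding spanpsi_def by (rule exI[of _ "\<lambda>n. 0"]) simp

lemma span_sum: "finite I \<Longrightarrow> (\<And>i. i \<in> I \<Longrightarrow> spanpsi (f i)) \<Longrightarrow> spanpsi (\<lambda>x. \<Sum>i\<in>I. f i x)"
proof (induction I rule: finite_induct)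
  case empty thus ?case by (simp add: span_zero)
next
  case (insert i I)
  thus ?case by (simp add: span_add)
qed

lemma span_cong: "spanpsi g \<Longrightarrow> (\<And>x. x > 0 \<Longrightarrow> f x = g x) \<Longrightarrow> spanpsi f"
  unfolding spanpsi_def by auto

lemma span_E: "j \<le> N \<Longrightarrow> spanpsi (\<lambda>x. exp (-x/2) * x^j)"
proof (induction "N - j" arbitrary: j rule: less_induct)
  case less
  define n where "n = l - j"
  have n: "n \<in> {1..l}" using less.prems l1 by (auto simp: n_def)
  have mm: "mm n = j" using less.prems l1 by (simp add: n_def)
  have IH: "spanpsi (\<lambda>x. exp (-x/2) * x^(j+i))" if "i \<in> {1..kk n}" for i
    using that less.prems l1 by (intro less.hyps) (auto simp: n_def)
  have b0: "bb n 0 \<noteq> 0" by (rule bb0[OF n])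
  have rhs: "spanpsi (\<lambda>x. (1 / bb n 0) * \<psi> n x + (\<Sum>i\<in>{1..kk n}. (- bb n i / bb n 0) * (exp (-x/2) * x^(j+i))))"
    by (intro span_add span_scale span_psi[OF n] span_sum IH) auto
  show ?case
  proof (rule span_cong[OF rhs])
    fix x :: real assume x: "x > 0"
    have "{..kk n} = insert 0 {1..kk n}" by auto
    hence "\<psi> n x = exp (-x/2) * (bb n 0 * x^j) + (\<Sum>i\<in>{1..kk n}. bb n i * (exp (-x/2) * x^(j+i)))"
      unfolding psi_expand[OF n x] mm by (simp add: distrib_left sum_distrib_left mult_ac)
    thus "exp (-x/2) * x^j = (1 / bb n 0) * \<psi> n x + (\<Sum>i\<in>{1..kk n}. (- bb n i / bb n 0) * (exp (-x/2) * x^(j+i)))"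
      using b0 by (simp add: field_simps sum_divide_distrib[symmetric] sum_negf)
  qed
qed

end


context hk begin

definition pc :: "nat \<Rightarrow> nat \<Rightarrow> real" where
  "pc n d = (if mm n \<le> d then bb n (d - mm n) else 0)"

lemma psi_poly:
  assumes n: "n \<in> {1..l}" and x: "x > 0"
  shows "\<psi> n x = exp (-x/2) * (\<Sum>d\<le>N. pc n d * x^d)"
proof -
  have N: "N = mm n + kk n" using n by auto
  have "(\<Sum>i\<le>kk n. bb n i * x^(mm n + i)) = (\<Sum>d\<in>{mm n..mm n + kk n}. bb n (d - mm n) * x^d)"
    by (rule sum.reindex_bij_witness[of _ "\<lambda>d. d - mm n" "\<lambda>i. mm n + i"]) auto
  also have "\<dots> = (\<Sum>d\<le>N. pc n d * x^d)"
    unfolding N pc_def by (rule sum.mono_neutral_cong_left) auto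
  finally show ?thesis using psi_expand[OF n x] by simp
qed

lemma indep:
  assumes "AE x in lborel. x > 0 \<longrightarrow> (\<Sum>n\<in>{1..l}. c n * \<psi> n x) = 0"
  shows "\<forall>n\<in>{1..l}. c n = 0"
proof -
  define coef where "coef d = (\<Sum>n\<in>{1..l}. c n * pc n d)" for d
  have eq: "(\<Sum>n\<in>{1..l}. c n * \<psi> n x) = exp (-x/2) * (\<Sum>d\<le>N. coef d * x^d)" if "x > 0" for x
  proof -
    have "(\<Sum>n\<in>{1..l}. c n * \<psi> n x) = (\<Sum>n\<in>{1..l}. c n * (exp (-x/2) * (\<Sum>d\<le>N. pc n d * x^d)))"
      using that by (intro sum.cong refl) (simp add: psi_poly)
    also have "\<dots> = exp (-x/2) * (\<Sum>d\<le>N. coef d * x^d)"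
      unfolding coef_def sum_distrib_left sum_distrib_right
      by (subst sum.swap) (simp add: mult_ac)
    finally show ?thesis .
  qed
  have "AE x in lborel. x > 0 \<longrightarrow> (\<Sum>d\<le>N. coef d * x^d) = 0"
    using assms
  proof eventually_elim
    case (elim x)
    show ?case
    proof
      assume "x > 0"
      hence "exp (-x/2) * (\<Sum>d\<le>N. coef d * x^d) = 0" using elim eq[of x] by simp
      thus "(\<Sum>d\<le>N. coef d * x^d) = 0" by simp
    qed
  qed
  hence "infinite {x. (\<Sum>d\<le>N. coef d * x^d) = 0}" by (rule ae_pos_infinite)
  hence cz: "\<forall>d\<le>N. coef d = 0" using polyfun_finite_roots[where n=N and c=coef] by auto
  have main: "d \<le> N \<Longrightarrow> c (l - d) = 0" for d
  proof (induction d rule: less_induct)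
    case (less d)
    have ld: "l - d \<in> {1..l}" using less.prems l1 by auto
    have "coef d = (\<Sum>n\<in>{1..l}. if n = l - d then c n * bb n 0 else 0)"
      unfolding coef_def
    proof (intro sum.cong refl)
      fix n assume n: "n \<in> {1..l}"
      show "c n * pc n d = (if n = l - d then c n * bb n 0 else 0)"
      proof (cases "mm n \<le> d")
        case True
        show ?thesis
        proof (cases "n = l - d")
          case True thus ?thesis using less.prems l1 n by (auto simp: pc_def)
        next
          case False
          hence "mm n < d" using True n less.prems by auto
          hence "c (l - mm n) = 0" using less.IH less.prems by auto
          moreover have "l - mm n = n" using n by auto
          ultimately show ?thesis using False by simp
        qed
      next
        case False
        hence "n \<noteq> l - d" using n less.prems by auto
        thus ?thesis using False by (simp add: pc_def)
      qed
    qed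
    also have "\<dots> = c (l - d) * bb (l - d) 0" using ld by (simp add: sum.delta)
    finally have "c (l - d) * bb (l - d) 0 = 0" using cz less.prems by simp
    thus ?case using bb0[OF ld] by simp
  qed
  show ?thesis
  proof
    fix n assume n: "n \<in> {1..l}"
    hence "c (l - (l - n)) = 0" by (intro main) auto
    thus "c n = 0" using n by simp
  qed
qed

end


lemma powi_m1: "n \<le> l \<Longrightarrow> (-1::real) powi (int n - int l) = (-1)^(l-n)"
proof -
  assume "n \<le> l"
  hence e: "int n - int l = - int (l - n)" by simp
  have "(-1::real) powi (- int (l - n)) = inverse ((-1::real) powi int (l-n))"
    by (rule power_int_minus)
  also have "(-1::real) powi int (l-n) = (-1)^(l-n)" by (rule power_int_of_nat)
  also have "inverse ((-1::real)^(l-n)) = (-1)^(l-n)"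
    by (simp only: power_inverse[symmetric]) simp
  finally show ?thesis unfolding e .
qed
lemma m1_sq: "((-1::real)^k) * ((-1)^k) = 1"
  by (simp only: power_mult_distrib[symmetric]) simp

context hk begin

lemma a_meas: "(\<lambda>y. a (x + y)) \<in> borel_measurable lborel"
proof -
  have "(\<lambda>y. a (x + y)) = (\<lambda>y. exp (-(x+y)/2) * (\<Sum>r\<le>N. alpha N r * (x+y)^r))"
    by (rule ext) (simp add: a_expand)
  also have "\<dots> \<in> borel_measurable borel"
    by (intro borel_measurable_continuous_onI continuous_intros) auto
  finally show ?thesis by simp
qed

lemma span_range:
  assumes "L2pos f"
  shows "spanpsi (hankel_op a f)"
proof -
  have "spanpsi (\<lambda>x. \<Sum>r\<le>N. \<Sum>j\<le>r. (alpha N r * of_nat (r choose j) * Mf f (r-j)) * (exp (-x/2) * x^j))"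
    by (intro span_sum span_scale span_E) auto
  thus ?thesis
  proof (rule span_cong)
    fix x :: real
    show "hankel_op a f x = (\<Sum>r\<le>N. \<Sum>j\<le>r. (alpha N r * of_nat (r choose j) * Mf f (r-j)) * (exp (-x/2) * x^j))"
      unfolding hankel_formula(2)[OF Mint[OF assms]]
      by (simp only: sum_distrib_left) (intro sum.cong refl; simp only: mult_ac)
  qed
qed

lemma hankel_sum:
  assumes "\<And>n. n \<in> {1..l} \<Longrightarrow> L2pos (g n)"
  shows "hankel_op a (\<lambda>y. \<Sum>n\<in>{1..l}. c n * g n y) x = (\<Sum>n\<in>{1..l}. c n * hankel_op a (g n) x)"
proof -
  have int: "set_integrable lborel {0<..} (\<lambda>y. c n * (a (x + y) * g n y))" if "n \<in> {1..l}" for n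
    using hankel_formula(1)[OF Mint[OF assms[OF that]]] by auto
  have "hankel_op a (\<lambda>y. \<Sum>n\<in>{1..l}. c n * g n y) x = (LINT y:{0<..}|lborel. (\<Sum>n\<in>{1..l}. c n * (a (x + y) * g n y)))"
    unfolding hankel_op_def by (simp add: sum_distrib_left mult_ac)
  also have "\<dots> = (\<Sum>n\<in>{1..l}. c n * hankel_op a (g n) x)"
    by (subst set_integral_sum'[OF int]) (simp_all add: hankel_op_def)
  finally show ?thesis .
qed

lemma hankel_cong:
  assumes "ae_eq_pos f g" "f \<in> borel_measurable lborel" "g \<in> borel_measurable lborel"
  shows "hankel_op a f x = hankel_op a g x"
  unfolding hankel_op_def
proof (rule set_lebesgue_integral_cong_AE)
  show "{0::real<..} \<in> sets lborel" by simp
  show "(\<lambda>y. a (x + y) * f y) \<in> borel_measurable lborel" using a_meas assms(2) by simp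
  show "(\<lambda>y. a (x + y) * g y) \<in> borel_measurable lborel" using a_meas assms(3) by simp
  show "AE y\<in>{0<..} in lborel. a (x + y) * f y = a (x + y) * g y"
    using assms(1) unfolding ae_eq_pos_def by eventually_elim auto
qed

definition lam :: "nat \<Rightarrow> real" where "lam n = (-1)^(mm n)"

lemma psi_not_zero:
  assumes n: "n \<in> {1..l}"
  shows "\<not> ae_eq_pos (\<psi> n) (\<lambda>_. 0)"
proof
  assume h: "ae_eq_pos (\<psi> n) (\<lambda>_. 0)"
  have "AE x in lborel. x > 0 \<longrightarrow> (\<Sum>n'\<in>{1..l}. (if n' = n then 1 else 0) * \<psi> n' x) = 0"
    using h unfolding ae_eq_pos_def
  proof eventually_elim
    case (elim x)
    have "(\<Sum>n'\<in>{1..l}. (if n' = n then 1 else 0) * \<psi> n' x) = (\<Sum>n'\<in>{1..l}. if n' = n then \<psi> n x else 0)"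
      by (intro sum.cong) auto
    also have "\<dots> = \<psi> n x" using n by (simp add: sum.delta)
    finally show ?case using elim by simp
  qed
  from indep[OF this] n have "(if n = n then 1 else 0) = (0::real)" by blast
  thus False by simp
qed

lemma psi_eigfun: "n \<in> {1..l} \<Longrightarrow> hankel_eigenfunction a (lam n) (\<psi> n)"
  unfolding hankel_eigenfunction_def
  by (intro conjI psi_L2 psi_not_zero) (auto simp: ae_eq_pos_def lam_def psi_eigen intro!: AE_I2)

lemma eig_subset:
  assumes "\<mu> \<noteq> 0" "hankel_eigenvalue a \<mu>"
  shows "\<exists>n\<in>{1..l}. \<mu> = lam n"
proof -
  obtain f where f: "L2pos f" "\<not> ae_eq_pos f (\<lambda>_. 0)" "ae_eq_pos (hankel_op a f) (\<lambda>x. \<mu> * f x)"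
    using assms(2) unfolding hankel_eigenvalue_def by blast
  obtain d where d: "\<forall>x>0. hankel_op a f x = (\<Sum>n\<in>{1..l}. d n * \<psi> n x)"
    using span_range[OF f(1)] unfolding spanpsi_def by blast
  define c where "c n = d n / \<mu>" for n
  define g where "g y = (\<Sum>n\<in>{1..l}. c n * \<psi> n y)" for y
  have fg: "ae_eq_pos f g"
    using f(3) unfolding ae_eq_pos_def
  proof eventually_elim
    case (elim x)
    show ?case
    proof
      assume x: "x > 0"
      hence "\<mu> * f x = (\<Sum>n\<in>{1..l}. d n * \<psi> n x)" using elim d by simp
      hence "f x = (\<Sum>n\<in>{1..l}. d n * \<psi> n x) / \<mu>" using assms(1) by (simp add: field_simps)
      thus "f x = g x" unfolding g_def c_def by (simp add: sum_divide_distrib)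
    qed
  qed
  have fm: "f \<in> borel_measurable lborel" using f(1) by (simp add: L2pos_def)
  have gm: "g \<in> borel_measurable lborel" unfolding g_def using psi_meas by measurable
  have Ag: "hankel_op a f x = (\<Sum>n\<in>{1..l}. c n * lam n * \<psi> n x)" if x: "x > 0" for x
  proof -
    have "hankel_op a f x = hankel_op a g x" by (rule hankel_cong[OF fg fm gm])
    also have "\<dots> = (\<Sum>n\<in>{1..l}. c n * hankel_op a (\<psi> n) x)"
      unfolding g_def by (rule hankel_sum) (rule psi_L2)
    also have "\<dots> = (\<Sum>n\<in>{1..l}. c n * lam n * \<psi> n x)"
      using x by (intro sum.cong refl) (simp add: psi_eigen lam_def)
    finally show ?thesis .
  qed
  have "AE x in lborel. x > 0 \<longrightarrow> (\<Sum>n\<in>{1..l}. (c n * (lam n - \<mu>)) * \<psi> n x) = 0"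
    using f(3) fg unfolding ae_eq_pos_def
  proof eventually_elim
    case (elim x)
    show ?case
    proof
      assume x: "x > 0"
      have "(\<Sum>n\<in>{1..l}. (c n * (lam n - \<mu>)) * \<psi> n x)
          = (\<Sum>n\<in>{1..l}. c n * lam n * \<psi> n x) - \<mu> * g x"
        unfolding g_def by (simp add: algebra_simps sum_subtractf sum_distrib_left)
      also have "\<dots> = hankel_op a f x - \<mu> * f x" using Ag[OF x] elim x by simp
      also have "\<dots> = 0" using elim x by simp
      finally show "(\<Sum>n\<in>{1..l}. (c n * (lam n - \<mu>)) * \<psi> n x) = 0" .
    qed
  qed
  from indep[OF this] have cz: "\<forall>n\<in>{1..l}. c n * (lam n - \<mu>) = 0" .
  show ?thesis
  proof (rule ccontr)
    assume "\<not> ?thesis"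
    hence cz0: "\<forall>n\<in>{1..l}. c n = 0" using cz by auto
    have "ae_eq_pos f (\<lambda>_. 0)" using fg unfolding ae_eq_pos_def g_def
      by eventually_elim (auto intro!: sum.neutral simp: cz0)
    thus False using f(2) by simp
  qed
qed

lemma rank: "hankel_rank a l"
  unfolding hankel_rank_def
proof (rule exI[of _ "\<lambda>i. \<psi> (i+1)"], intro conjI)
  show "\<forall>i<l. \<exists>f. L2pos f \<and> ae_eq_pos (\<psi> (i+1)) (hankel_op a f)"
  proof (intro allI impI)
  fix i assume i: "i < l"
  hence n: "i + 1 \<in> {1..l}" by auto
  define f where "f y = lam (i+1) * \<psi> (i+1) y" for y
  have "L2pos f"
    unfolding L2pos_def
  proof
    show "f \<in> borel_measurable lborel" unfolding f_def using psi_meas by measurable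
    show "set_integrable lborel {0<..} (\<lambda>x. (f x)^2)"
      using psi_L2[OF n] unfolding L2pos_def f_def lam_def
      by (simp add: power_mult_distrib power_mult[symmetric] m1_sq)
  qed
  moreover have "ae_eq_pos (\<psi> (i+1)) (hankel_op a f)"
    unfolding ae_eq_pos_def
  proof (intro AE_I2 impI)
    fix x :: real assume x: "x > 0"
    have "hankel_op a f x = lam (i+1) * hankel_op a (\<psi> (i+1)) x"
      unfolding hankel_op_def f_def by (simp add: mult.left_commute)
    also have "\<dots> = \<psi> (i+1) x"
      using psi_eigen[OF n x] unfolding lam_def by (simp add: mult.assoc[symmetric] m1_sq)
    finally show "\<psi> (i+1) x = hankel_op a f x" by simp
  qed
  ultimately show "\<exists>f. L2pos f \<and> ae_eq_pos (\<psi> (i+1)) (hankel_op a f)" by blast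
  qed
next
  have re: "(\<Sum>i<l. h (i+1)) = (\<Sum>n\<in>{1..l}. h n)" for h :: "nat \<Rightarrow> real"
    by (rule sum.reindex_bij_witness[of _ "\<lambda>n. n - 1" "\<lambda>i. i + 1"]) auto
  show "ae_lin_indep l (\<lambda>i. \<psi> (i+1))"
    unfolding ae_lin_indep_def
  proof (rule allI, rule impI)
    fix c assume h: "ae_eq_pos (\<lambda>x. \<Sum>i<l. c i * \<psi> (i+1) x) (\<lambda>_. 0)"
    have "AE x in lborel. x > 0 \<longrightarrow> (\<Sum>n\<in>{1..l}. c (n-1) * \<psi> n x) = 0"
      using h unfolding ae_eq_pos_def
    proof eventually_elim
      case (elim x)
      have "(\<Sum>i<l. c i * \<psi> (i+1) x) = (\<Sum>n\<in>{1..l}. c (n-1) * \<psi> n x)"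
        using re[of "\<lambda>n. c (n-1) * \<psi> n x"] by simp
      thus ?case using elim by simp
    qed
    from indep[OF this] have h2: "\<And>n. n \<in> {1..l} \<Longrightarrow> c (n-1) = 0" by blast
    show "\<forall>i<l. c i = 0"
    proof (intro allI impI)
      fix i assume "i < l"
      hence "i + 1 \<in> {1..l}" by auto
      from h2[OF this] show "c i = 0" by simp
    qed
  qed
next
  have re: "(\<Sum>i<l. h (i+1)) = (\<Sum>n\<in>{1..l}. h n)" for h :: "nat \<Rightarrow> real"
    by (rule sum.reindex_bij_witness[of _ "\<lambda>n. n - 1" "\<lambda>i. i + 1"]) auto
  show "\<forall>f. L2pos f \<longrightarrow> (\<exists>c. ae_eq_pos (hankel_op a f) (\<lambda>x. \<Sum>i<l. c i * \<psi> (i+1) x))"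
  proof (intro allI impI)
  fix f assume "L2pos f"
    then obtain d where d: "\<forall>x>0. hankel_op a f x = (\<Sum>n\<in>{1..l}. d n * \<psi> n x)"
      using span_range unfolding spanpsi_def by blast
    show "\<exists>c. ae_eq_pos (hankel_op a f) (\<lambda>x. \<Sum>i<l. c i * \<psi> (i+1) x)"
    proof (rule exI[of _ "\<lambda>i. d (i+1)"])
      show "ae_eq_pos (hankel_op a f) (\<lambda>x. \<Sum>i<l. d (i+1) * \<psi> (i+1) x)"
        unfolding ae_eq_pos_def
      proof (intro AE_I2 impI)
        fix x :: real assume "x > 0"
        thus "hankel_op a f x = (\<Sum>i<l. d (i+1) * \<psi> (i+1) x)"
          using d re[of "\<lambda>n. d n * \<psi> n x"] by simp
      qed
    qed
  qed
qed

end


theorem proposition5p3: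
  fixes l :: nat and a :: "real \<Rightarrow> real" and \<psi> :: "nat \<Rightarrow> real \<Rightarrow> real"
  assumes "l \<ge> 1"
    and "\<And>x. a x = exp (- x / 2) * laguerre 1 (l - 1) x"
    and "\<And>n x. \<psi> n x = (let p = real l + 1/2 - real n in
            exp (- x / 2) * x powr (p - 1/2) * laguerre (2 * p) (n - 1) x)"
  shows "hankel_rank a l
    \<and> {\<mu>. \<mu> \<noteq> 0 \<and> hankel_eigenvalue a \<mu>} = {(-1::real) powi (int n - int l) | n. n \<in> {1..l}}
    \<and> (\<forall>n\<in>{1..l}. hankel_eigenfunction a ((-1::real) powi (int n - int l)) (\<psi> n))"
proof -
  interpret hk l a \<psi> using assms by unfold_locales
  have pw: "(-1::real) powi (int n - int l) = lam n" if "n \<in> {1..l}" for n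
    using that by (simp add: powi_m1 lam_def)
  have ef: "\<forall>n\<in>{1..l}. hankel_eigenfunction a ((-1::real) powi (int n - int l)) (\<psi> n)"
    using psi_eigfun pw by simp
  have st: "{\<mu>. \<mu> \<noteq> 0 \<and> hankel_eigenvalue a \<mu>} = {(-1::real) powi (int n - int l) | n. n \<in> {1..l}}"
  proof (intro equalityI subsetI)
    fix \<mu> assume "\<mu> \<in> {\<mu>. \<mu> \<noteq> 0 \<and> hankel_eigenvalue a \<mu>}"
    hence "\<mu> \<noteq> 0" "hankel_eigenvalue a \<mu>" by auto
    then obtain n where n: "n \<in> {1..l}" "\<mu> = lam n" using eig_subset by blast
    hence "\<mu> = (-1::real) powi (int n - int l)" using pw by simp
    thus "\<mu> \<in> {(-1::real) powi (int n - int l) | n. n \<in> {1..l}}" using n(1) by blast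
  next
    fix \<mu> assume "\<mu> \<in> {(-1::real) powi (int n - int l) | n. n \<in> {1..l}}"
    then obtain n where n: "n \<in> {1..l}" "\<mu> = lam n" using pw by auto
    have "\<mu> \<noteq> 0" using n by (simp add: lam_def)
    moreover have "hankel_eigenvalue a \<mu>"
      using psi_eigfun[OF n(1)] n(2) unfolding hankel_eigenvalue_def hankel_eigenfunction_def by blast
    ultimately show "\<mu> \<in> {\<mu>. \<mu> \<noteq> 0 \<and> hankel_eigenvalue a \<mu>}" by simp
  qed
  show ?thesis using rank st ef by blast
qed

end
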